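(* Let $p$ be a prime and $n \geq 2$. Let $N$ be the cyclic group of order $p^n$, let $K$ be the Sylow $p$-subgroup of $\mathrm{Aut}(N)$, and let $G := N \rtimes K$ (with the natural action). Then $G$ is weakly-top.
   Context: For a group $H$, $H'$ denotes its commutator subgroup. A finite group $G$ is weakly-top if $|H/H'| \leq |G/G'|$ for every proper subgroup $H<G$. *)

theory Defs
  imports "HOL-Algebra.Algebra" "HOL-Computational_Algebra.Primes"
begin

definition abelianization_order :: "('a, 'b) monoid_scheme \<Rightarrow> nat" where
  "abelianization_order G = order (G Mod derived G (carrier G))"

definition weakly_top :: "('a, 'b) monoid_scheme \<Rightarrow> bool" where
  "weakly_top G \<longleftrightarrow> group G \<and> finite (carrier G) \<and>
     (\<forall>H. subgroup H G \<and> H \<noteq> carrier G \<longrightarrow>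
        abelianization_order (G\<lparr>carrier := H\<rparr>) \<le> abelianization_order G)"

definition sylow_subgroup :: "('a, 'b) monoid_scheme \<Rightarrow> nat \<Rightarrow> 'a set \<Rightarrow> bool" where
  "sylow_subgroup G p K \<longleftrightarrow> subgroup K G \<and> card K = p ^ multiplicity p (order G)"

definition aut_semidirect :: "('a, 'b) monoid_scheme \<Rightarrow> ('a \<Rightarrow> 'a) set \<Rightarrow> ('a \<times> ('a \<Rightarrow> 'a)) monoid" where
  "aut_semidirect N K =
    \<lparr>carrier = carrier N \<times> K,
     monoid.mult = (\<lambda>(a, f) (b, g). (a \<otimes>\<^bsub>N\<^esub> f b, f \<otimes>\<^bsub>AutoGroup N\<^esub> g)),
     one = (\<one>\<^bsub>N\<^esub>, \<one>\<^bsub>AutoGroup N\<^esub>)\<rparr>"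

end

theory Submission
  imports Defs "HOL-Number_Theory.Number_Theory"
begin


lemma fiber_bound:
  assumes "finite A" "\<And>y. y \<in> f ` A \<Longrightarrow> card {x\<in>A. f x = y} \<le> k"
  shows "card A \<le> k * card (f ` A)"
proof -
  have "A = (\<Union>y\<in>f ` A. {x\<in>A. f x = y})" by auto
  hence "card A \<le> (\<Sum>y\<in>f ` A. card {x\<in>A. f x = y})"
    using card_UN_le[of "f ` A" "\<lambda>y. {x\<in>A. f x = y}"] assms(1) by simp
  also have "\<dots> \<le> (\<Sum>y\<in>f ` A. k)" by (rule sum_mono) (use assms(2) in auto)
  finally show ?thesis by (simp add: mult.commute)
qed

lemma count_cong:
  fixes P m :: nat
  assumes "S \<subseteq> {..<P}" "m > 0" "m dvd P" "\<And>i j. i \<in> S \<Longrightarrow> j \<in> S \<Longrightarrow> i mod m = j mod m"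
  shows "card S \<le> P div m"
proof -
  have "inj_on (\<lambda>i. i div m) S"
  proof (rule inj_onI)
    fix i j assume "i \<in> S" "j \<in> S" "i div m = j div m"
    thus "i = j" using assms(4)[of i j] by (metis div_mult_mod_eq)
  qed
  moreover have "(\<lambda>i. i div m) ` S \<subseteq> {..<P div m}"
  proof
    fix y assume "y \<in> (\<lambda>i. i div m) ` S"
    then obtain i where "i \<in> S" "y = i div m" by auto
    hence "i < P" using assms(1) by auto
    then show "y \<in> {..<P div m}" using assms(2,3) \<open>y = i div m\<close>
      by (auto simp: less_mult_imp_div_less dvd_def)
  qed
  ultimately show ?thesis using card_image[of "\<lambda>i. i div m" S] card_mono[of "{..<P div m}"] by (metis card_lessThan finite_lessThan)
qed



locale wt = comm_group N for N :: "('a,'b) monoid_scheme" (structure) +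
  fixes p n :: nat and K :: "('a \<Rightarrow> 'a) set" and g :: 'a
  assumes p_prime: "Factorial_Ring.prime p" and n2: "n \<ge> 2" and ordN: "order N = p^n"
    and K_sub: "subgroup K (AutoGroup N)"
    and K_card: "card K = p ^ multiplicity p (order (AutoGroup N))"
    and g_in: "g \<in> carrier N" and g_gen: "subgroup_generated N {g} = N"
begin

abbreviation PP where "PP \<equiv> p^n"
definition e :: "nat \<Rightarrow> 'a" where "e i = g [^]\<^bsub>N\<^esub> i"
definition phi :: "nat \<Rightarrow> 'a \<Rightarrow> 'a" where "phi u = (\<lambda>x\<in>carrier N. x [^]\<^bsub>N\<^esub> u)"
definition lg :: "'a \<Rightarrow> nat" where "lg x = (SOME i. i < PP \<and> x = e i)"

lemma p_gt1: "p > 1" using p_prime prime_gt_1_nat by blast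

lemma PP_gt1: "PP > 1" using one_less_power[of p n] p_gt1 n2 by simp

lemma ord_g: "ord g = PP"
  using cyclic_order_is_ord[OF g_in] g_gen ordN by simp

lemma e_closed[simp]: "e i \<in> carrier N" by (simp add: e_def g_in)

lemma e_add: "e i \<otimes> e j = e (i + j)" by (simp add: e_def g_in nat_pow_mult)

lemma e_pow: "e i [^] k = e (i * k)" by (simp add: e_def g_in nat_pow_pow)

lemma e_0: "e 0 = \<one>" by (simp add: e_def)

lemma e_eq: "e i = e j \<longleftrightarrow> i mod PP = j mod PP"
proof -
  have "e i = e j \<longleftrightarrow> g [^] (int i) = g [^] (int j)" by (simp add: e_def int_pow_int)
  also have "\<dots> \<longleftrightarrow> int PP dvd (int j - int i)" using int_pow_eq[OF g_in] ord_g by simp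
  also have "\<dots> \<longleftrightarrow> int j mod int PP = int i mod int PP" by (simp add: mod_eq_dvd_iff)
  also have "\<dots> \<longleftrightarrow> i mod PP = j mod PP" by (metis of_nat_eq_iff zmod_int)
  finally show ?thesis .
qed

lemma e_mod: "e (i mod PP) = e i" by (simp add: e_eq)

lemma e_one_iff: "e i = \<one> \<longleftrightarrow> PP dvd i"
  using e_eq[of i 0] e_0 by (simp add: dvd_eq_mod_eq_0)

lemma carrier_e: assumes "x \<in> carrier N" shows "\<exists>i<PP. x = e i"
proof -
  have "carrier N = generate N {g}"
    using g_gen g_in by (metis carrier_subgroup_generated inf.absorb2 empty_subsetI insert_subset)
  also have "\<dots> = { g [^] k | k. k \<in> (UNIV :: nat set) }"
    using generate_pow_nat[OF g_in] ord_g PP_gt1 p_gt1 by simp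
  finally obtain k where "x = e k" using assms e_def by auto
  then show ?thesis using e_mod[of k] PP_gt1 by (metis mod_less_divisor not_one_less_zero gr0I)
qed

lemma lg: assumes "x \<in> carrier N" shows "lg x < PP" "x = e (lg x)"
proof -
  have "\<exists>i. i < PP \<and> x = e i" using carrier_e[OF assms] by blast
  hence "lg x < PP \<and> x = e (lg x)" unfolding lg_def by (rule someI_ex)
  thus "lg x < PP" "x = e (lg x)" by auto
qed

lemma phi_e: "phi u (e i) = e (i * u)" by (simp add: phi_def e_pow)

lemma carrier_finite: "finite (carrier N)"
  using ordN PP_gt1 order_gt_0_iff_finite by (metis gr_zeroI not_one_less_zero)

end

context wt begin

abbreviation A where "A \<equiv> AutoGroup N"

lemma phi_closed: "x \<in> carrier N \<Longrightarrow> phi u x \<in> carrier N" by (simp add: phi_def)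

lemma phi_hom: "phi u \<in> hom N N"
  unfolding hom_def phi_def by (auto simp: pow_mult_distrib m_comm)

lemma coprime_PP: "coprime u p \<Longrightarrow> coprime u PP"
  using n2 by simp

lemma phi_auto: assumes "coprime u p" shows "phi u \<in> auto N"
proof -
  have inj: "inj_on (phi u) (carrier N)"
  proof (rule inj_onI)
    fix x y assume x: "x \<in> carrier N" and y: "y \<in> carrier N" and eq: "phi u x = phi u y"
    obtain i j where "x = e i" "y = e j" using carrier_e x y by blast
    with eq have "(i * u) mod PP = (j * u) mod PP" by (simp add: phi_e e_eq)
    hence "[i * u = j * u] (mod PP)" by (simp add: cong_def)
    hence "[i = j] (mod PP)" using cong_mult_rcancel_nat[OF coprime_PP[OF assms]] by simp
    thus "x = y" using \<open>x = e i\<close> \<open>y = e j\<close> by (simp add: cong_def e_eq)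
  qed
  have "phi u ` carrier N = carrier N"
    by (rule endo_inj_surj[OF carrier_finite _ inj]) (auto simp: phi_closed)
  hence "bij_betw (phi u) (carrier N) (carrier N)" using inj by (simp add: bij_betw_def)
  moreover have "phi u \<in> extensional (carrier N)" by (simp add: phi_def)
  ultimately show ?thesis using phi_hom unfolding auto_def Bij_def by blast
qed

lemma auto_phi: assumes "f \<in> auto N" shows "\<exists>u<PP. coprime u p \<and> f = phi u"
proof -
  have hom: "f \<in> hom N N" and bij: "f \<in> Bij (carrier N)" using assms by (auto simp: auto_def)
  have "f g \<in> carrier N" using hom g_in by (auto simp: hom_def)
  then obtain u where u: "u < PP" "f g = e u" using carrier_e by blast
  have fe: "f (e i) = e (i * u)" for i
  proof -
    have "f (e i) = f g [^] i" unfolding e_def using hom_nat_pow[OF hom g_in] is_group by simp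
    also have "\<dots> = e (i * u)" using u(2) e_pow by (simp add: mult.commute)
    finally show ?thesis .
  qed
  have feq: "f = phi u"
  proof (rule extensionalityI[of _ "carrier N"])
    show "f \<in> extensional (carrier N)" using bij Bij_imp_extensional by blast
    show "phi u \<in> extensional (carrier N)" by (simp add: phi_def)
    fix x assume "x \<in> carrier N"
    then obtain i where "x = e i" using carrier_e by blast
    thus "f x = phi u x" by (simp add: fe phi_e)
  qed
  have "coprime u p"
  proof (rule ccontr)
    assume "\<not> coprime u p"
    hence "p dvd u" using prime_imp_coprime[OF p_prime, of u] coprime_commute by blast
    hence "p^(n-1) * p dvd p^(n-1) * u" by (rule mult_dvd_mono[OF dvd_refl])
    moreover have "p^(n-1) * p = PP" using n2 power_minus_mult[of n p] by simp
    ultimately have "PP dvd p^(n-1) * u" by metis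
    hence "e (p^(n-1) * u) = e 0" using e_one_iff e_0 by metis
    hence "f (e (p^(n-1))) = f (e 0)" using fe[of "p^(n-1)"] fe[of 0] by simp
    moreover have "inj_on f (carrier N)" using bij by (auto simp: Bij_def bij_betw_def)
    ultimately have "e (p^(n-1)) = e 0" by (meson e_closed inj_onD)
    hence "PP dvd p^(n-1)" using e_one_iff e_0 by simp
    moreover have "p^(n-1) < PP" using p_gt1 n2 by (simp add: power_strict_increasing)
    moreover have "p^(n-1) > 0" using p_gt1 by simp
    ultimately show False by (simp add: nat_dvd_not_less)
  qed
  thus ?thesis using u feq by blast
qed

lemma phi_inj: assumes "u < PP" "v < PP" "phi u = phi v" shows "u = v"
proof -
  have "e (1 * u) = e (1 * v)" using assms(3) phi_e by metis
  thus ?thesis using assms(1,2) e_eq by simp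
qed

lemma carrier_A: "carrier A = auto N" by (simp add: AutoGroup_def BijGroup_def)

lemma A_mult: assumes "coprime u p" "coprime v p"
  shows "phi u \<otimes>\<^bsub>A\<^esub> phi v = phi (u * v)"
proof -
  have "phi u \<in> Bij (carrier N)" "phi v \<in> Bij (carrier N)"
    using phi_auto assms by (auto simp: auto_def)
  moreover have "compose (carrier N) (phi u) (phi v) = phi (u * v)"
  proof (rule ext)
    fix x show "compose (carrier N) (phi u) (phi v) x = phi (u * v) x"
      by (cases "x \<in> carrier N") (simp_all add: compose_def phi_def nat_pow_pow mult.commute)
  qed
  ultimately show ?thesis by (simp add: AutoGroup_def BijGroup_def)
qed

lemma A_one: "\<one>\<^bsub>A\<^esub> = phi 1"
proof -
  have "(\<lambda>x\<in>carrier N. x) = phi 1"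
  proof (rule ext)
    fix x show "(\<lambda>x\<in>carrier N. x) x = phi 1 x" by (cases "x \<in> carrier N") (simp_all add: phi_def)
  qed
  thus ?thesis by (simp add: AutoGroup_def BijGroup_def)
qed

end

context wt begin

abbreviation U where "U \<equiv> {u. u < PP \<and> coprime u p}"

lemma auto_eq: "auto N = phi ` U"
  using auto_phi phi_auto by blast

lemma U_totatives: "U = totatives PP"
proof -
  have "u \<in> U \<longleftrightarrow> u \<in> totatives PP" for u
  proof
    assume "u \<in> U"
    hence "u \<noteq> 0" using p_gt1 by (cases "u = 0") auto
    thus "u \<in> totatives PP" using \<open>u \<in> U\<close> n2 by (auto simp: totatives_def)
  next
    assume u: "u \<in> totatives PP"
    hence "u \<le> PP" "coprime u PP" by (auto simp: totatives_def)
    moreover have "u \<noteq> PP" using PP_gt1 \<open>coprime u PP\<close> by auto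
    ultimately show "u \<in> U" using n2 by auto
  qed
  thus ?thesis by blast
qed

lemma card_auto: "card (auto N) = p^(n-1) * (p-1)"
proof -
  have "inj_on phi U" using phi_inj by (auto simp: inj_on_def)
  hence "card (auto N) = card U" by (simp add: auto_eq card_image)
  also have "\<dots> = totient PP" by (simp add: U_totatives totient_def)
  also have "\<dots> = p^(n-1) * (p-1)" using totient_prime_power[OF p_prime] n2 by simp
  finally show ?thesis .
qed

lemma card_K: "card K = p^(n-1)"
proof -
  have pe: "prime_elem p" using p_prime by simp
  have "order A = p^(n-1) * (p-1)" using card_auto by (simp add: order_def carrier_A)
  moreover have "multiplicity p (p^(n-1) * (p-1)) = n - 1"
  proof -
    have "p^(n-1) \<noteq> 0" "p - 1 \<noteq> 0" using p_gt1 by auto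
    hence "multiplicity p (p^(n-1) * (p-1)) = multiplicity p (p^(n-1)) + multiplicity p (p-1)"
      by (rule prime_elem_multiplicity_mult_distrib[OF pe])
    moreover have "\<not> p dvd (p - 1)" using p_gt1 by (simp add: nat_dvd_not_less)
    ultimately show ?thesis using pe by (simp add: not_dvd_imp_multiplicity_0)
  qed
  ultimately show ?thesis using K_card by simp
qed

lemma K_auto: "K \<subseteq> auto N"
  using subgroup.subset[OF K_sub] carrier_A by simp

lemma K_finite: "finite K"
  using card_K p_gt1 by (metis card.infinite less_numeral_extra(3) zero_less_power gr_zeroI not_one_less_zero)

lemma K_phi: assumes "f \<in> K" obtains u where "u < PP" "coprime u p" "f = phi u"
  using auto_phi K_auto assms by blast

lemma A_group: "group A" using group.AutoGroup[OF is_group] .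

lemma A_pow: assumes "coprime u p" shows "phi u [^]\<^bsub>A\<^esub> (k::nat) = phi (u ^ k)"
proof (induction k)
  case 0
  then show ?case by (simp add: A_one)
next
  case (Suc k)
  have "phi u [^]\<^bsub>A\<^esub> Suc k = phi u [^]\<^bsub>A\<^esub> k \<otimes>\<^bsub>A\<^esub> phi u" by simp
  also have "\<dots> = phi (u ^ k * u)" using Suc A_mult assms by simp
  finally show ?case by (simp add: mult.commute)
qed

lemma fermat_iter: assumes "coprime u p" shows "[u ^ (p ^ k) = u] (mod p)"
proof (induction k)
  case 0 then show ?case by simp
next
  case (Suc k)
  have nd: "\<not> p dvd u" using assms p_gt1
    by (metis coprime_absorb_right coprime_commute nat_dvd_1_iff_1 less_irrefl_nat)
  have f: "[u ^ p = u] (mod p)"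
  proof -
    have "[u ^ (p - 1) * u = 1 * u] (mod p)"
      using fermat_theorem[OF p_prime nd] by (rule cong_mult) simp
    moreover have "u ^ (p - 1) * u = u ^ p" using p_gt1 by (metis power_minus_mult gr_zeroI not_one_less_zero)
    ultimately show ?thesis by simp
  qed
  have "u ^ (p ^ Suc k) = (u ^ (p ^ k)) ^ p" by (simp add: power_mult[symmetric] mult.commute)
  moreover have "[(u ^ (p ^ k)) ^ p = u ^ p] (mod p)" using Suc by (rule cong_pow)
  ultimately show ?case using f by (metis cong_trans)
qed

lemma K_cong1: assumes "f \<in> K" "f = phi u" "coprime u p" shows "[u = 1] (mod p)"
proof -
  interpret KG: group "A\<lparr>carrier := K\<rparr>" using subgroup.subgroup_is_group[OF K_sub A_group] .
  have "f [^]\<^bsub>A\<lparr>carrier := K\<rparr>\<^esub> order (A\<lparr>carrier := K\<rparr>) = \<one>\<^bsub>A\<lparr>carrier := K\<rparr>\<^esub>"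
    using KG.pow_order_eq_1 assms(1) by simp
  moreover have "f [^]\<^bsub>A\<lparr>carrier := K\<rparr>\<^esub> (k::nat) = f [^]\<^bsub>A\<^esub> k" for k
    unfolding nat_pow_def by simp
  ultimately have "f [^]\<^bsub>A\<^esub> (p^(n-1)) = \<one>\<^bsub>A\<^esub>"
    using card_K by (simp add: order_def)
  hence "phi (u ^ (p^(n-1))) = phi 1" using A_pow assms A_one by simp
  hence "e (1 * u ^ (p^(n-1))) = e (1 * 1)" by (metis phi_e)
  hence "u ^ (p^(n-1)) mod PP = 1 mod PP" using e_eq by simp
  hence "u ^ (p^(n-1)) mod p = 1 mod p" using n2
    by (metis mod_mod_cancel dvd_power gr_zeroI not_numeral_le_zero le_zero_eq)
  hence "[u ^ (p^(n-1)) = 1] (mod p)" by (simp add: cong_def)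
  moreover have "[u ^ (p^(n-1)) = u] (mod p)" using fermat_iter assms(3) .
  ultimately show ?thesis by (metis cong_sym cong_trans)
qed

end

context wt begin

abbreviation G where "G \<equiv> aut_semidirect N K"

lemma G_carrier: "carrier G = carrier N \<times> K" by (simp add: aut_semidirect_def)
lemma G_mult: "(a, f) \<otimes>\<^bsub>G\<^esub> (b, h) = (a \<otimes> f b, f \<otimes>\<^bsub>A\<^esub> h)" by (simp add: aut_semidirect_def)
lemma G_one: "\<one>\<^bsub>G\<^esub> = (\<one>, \<one>\<^bsub>A\<^esub>)" by (simp add: aut_semidirect_def)

lemma Kc: "f \<in> K \<Longrightarrow> x \<in> carrier N \<Longrightarrow> f x \<in> carrier N"
  by (metis K_phi phi_closed)
lemma Km: "f \<in> K \<Longrightarrow> x \<in> carrier N \<Longrightarrow> y \<in> carrier N \<Longrightarrow> f (x \<otimes> y) = f x \<otimes> f y"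
  by (metis K_phi phi_hom hom_mult)
lemma K1: "f \<in> K \<Longrightarrow> f \<one> = \<one>"
  by (metis K_phi phi_def one_closed nat_pow_one restrict_apply)
lemma K_mc: "f \<in> K \<Longrightarrow> h \<in> K \<Longrightarrow> f \<otimes>\<^bsub>A\<^esub> h \<in> K"
  using subgroup.m_closed[OF K_sub] .
lemma K_one: "\<one>\<^bsub>A\<^esub> \<in> K"
  using subgroup.one_closed[OF K_sub] .
lemma K_inv: "f \<in> K \<Longrightarrow> inv\<^bsub>A\<^esub> f \<in> K"
  using subgroup.m_inv_closed[OF K_sub] .
lemma K_A: "f \<in> K \<Longrightarrow> f \<in> carrier A"
  using subgroup.subset[OF K_sub] by blast

lemma A_mult_apply: assumes "f \<in> K" "h \<in> K" "x \<in> carrier N"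
  shows "(f \<otimes>\<^bsub>A\<^esub> h) x = f (h x)"
proof -
  obtain u v where u: "coprime u p" "f = phi u" and v: "coprime v p" "h = phi v"
    using K_phi assms by metis
  show ?thesis using A_mult[OF u(1) v(1)] u v assms(3)
    by (simp add: phi_def phi_closed nat_pow_pow mult.commute)
qed

lemma A_one_apply: "x \<in> carrier N \<Longrightarrow> \<one>\<^bsub>A\<^esub> x = x"
  by (simp add: A_one phi_def)

lemma K_comm: assumes "f \<in> K" "h \<in> K" shows "f \<otimes>\<^bsub>A\<^esub> h = h \<otimes>\<^bsub>A\<^esub> f"
proof -
  obtain u v where u: "coprime u p" "f = phi u" and v: "coprime v p" "h = phi v"
    using K_phi assms by metis
  show ?thesis using A_mult[OF u(1) v(1)] A_mult[OF v(1) u(1)] u v by (simp add: mult.commute)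
qed

lemma G_group: "group G"
proof (rule groupI)
  fix x y assume "x \<in> carrier G" "y \<in> carrier G"
  thus "x \<otimes>\<^bsub>G\<^esub> y \<in> carrier G"
    by (cases x, cases y) (auto simp: G_carrier G_mult Kc K_mc)
next
  show "\<one>\<^bsub>G\<^esub> \<in> carrier G" by (simp add: G_one G_carrier K_one)
next
  fix x y z assume "x \<in> carrier G" "y \<in> carrier G" "z \<in> carrier G"
  then obtain a f b h c k where xyz: "x = (a, f)" "y = (b, h)" "z = (c, k)"
    "a \<in> carrier N" "b \<in> carrier N" "c \<in> carrier N" "f \<in> K" "h \<in> K" "k \<in> K"
    by (auto simp: G_carrier)
  have "(a \<otimes> f b) \<otimes> (f \<otimes>\<^bsub>A\<^esub> h) c = a \<otimes> f (b \<otimes> h c)"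
    using xyz by (simp add: A_mult_apply Km Kc m_assoc)
  moreover have "(f \<otimes>\<^bsub>A\<^esub> h) \<otimes>\<^bsub>A\<^esub> k = f \<otimes>\<^bsub>A\<^esub> (h \<otimes>\<^bsub>A\<^esub> k)"
    using xyz by (simp add: group.is_monoid[OF A_group] monoid.m_assoc K_A)
  ultimately show "x \<otimes>\<^bsub>G\<^esub> y \<otimes>\<^bsub>G\<^esub> z = x \<otimes>\<^bsub>G\<^esub> (y \<otimes>\<^bsub>G\<^esub> z)"
    using xyz by (simp add: G_mult)
next
  fix x assume "x \<in> carrier G"
  then obtain a f where x: "x = (a, f)" "a \<in> carrier N" "f \<in> K" by (auto simp: G_carrier)
  thus "\<one>\<^bsub>G\<^esub> \<otimes>\<^bsub>G\<^esub> x = x"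
    by (simp add: G_one G_mult A_one_apply group.is_monoid[OF A_group] monoid.l_one K_A)
next
  fix x assume "x \<in> carrier G"
  then obtain a f where x: "x = (a, f)" "a \<in> carrier N" "f \<in> K" by (auto simp: G_carrier)
  define h where "h = inv\<^bsub>A\<^esub> f"
  have h: "h \<in> K" using K_inv x(3) h_def by simp
  have "(h (inv a), h) \<otimes>\<^bsub>G\<^esub> x = \<one>\<^bsub>G\<^esub>"
  proof -
    have "h (inv a) \<otimes> h a = \<one>" using h x by (simp add: Km[symmetric] K1)
    moreover have "h \<otimes>\<^bsub>A\<^esub> f = \<one>\<^bsub>A\<^esub>" using h_def x(3) K_A by (simp add: group.l_inv[OF A_group])
    ultimately show ?thesis using x by (simp add: G_mult G_one)
  qed
  moreover have "(h (inv a), h) \<in> carrier G" using h x by (simp add: G_carrier Kc)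
  ultimately show "\<exists>y\<in>carrier G. y \<otimes>\<^bsub>G\<^esub> x = \<one>\<^bsub>G\<^esub>" by blast
qed

lemma G_finite: "finite (carrier G)"
  using carrier_finite K_finite by (simp add: G_carrier)

lemma G_order: "order G = PP * p^(n-1)"
  using carrier_finite K_finite by (simp add: order_def G_carrier card_cartesian_product ordN[unfolded order_def] card_K)

end


lemma abel_order:
  fixes Gx :: "('a, 'b) monoid_scheme"
  assumes "group Gx" "finite (carrier Gx)"
  shows "abelianization_order Gx * card (derived Gx (carrier Gx)) = order Gx"
proof -
  have "subgroup (derived Gx (carrier Gx)) Gx" using group.derived_is_subgroup[OF assms(1)] by simp
  hence "card (carrier (Gx Mod (derived Gx (carrier Gx)))) * card (derived Gx (carrier Gx)) = order Gx"
    using group.lagrange[OF assms(1)] by (simp add: FactGroup_def)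
  thus ?thesis by (simp add: abelianization_order_def order_def)
qed

lemma comm_ident:
  fixes Gx :: "('a, 'b) monoid_scheme"
  assumes "group Gx" "x \<in> carrier Gx" "y \<in> carrier Gx"
  shows "(x \<otimes>\<^bsub>Gx\<^esub> y \<otimes>\<^bsub>Gx\<^esub> inv\<^bsub>Gx\<^esub> x \<otimes>\<^bsub>Gx\<^esub> inv\<^bsub>Gx\<^esub> y) \<otimes>\<^bsub>Gx\<^esub> (y \<otimes>\<^bsub>Gx\<^esub> x) = x \<otimes>\<^bsub>Gx\<^esub> y"
proof -
  interpret Gx: group Gx by fact
  have "inv\<^bsub>Gx\<^esub> y \<otimes>\<^bsub>Gx\<^esub> (y \<otimes>\<^bsub>Gx\<^esub> x) = x" using assms(2,3) by (simp add: Gx.m_assoc[symmetric])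
  hence "inv\<^bsub>Gx\<^esub> x \<otimes>\<^bsub>Gx\<^esub> (inv\<^bsub>Gx\<^esub> y \<otimes>\<^bsub>Gx\<^esub> (y \<otimes>\<^bsub>Gx\<^esub> x)) = \<one>\<^bsub>Gx\<^esub>" using assms(2) by simp
  thus ?thesis using assms(2,3) by (simp add: Gx.m_assoc)
qed

lemma arith1:
  fixes k i j u v p PP :: nat
  assumes "(k + (j + i * v)) mod PP = (i + j * u) mod PP" "p dvd PP" "[u = 1] (mod p)" "[v = 1] (mod p)"
  shows "p dvd k"
proof -
  have "[k + (j + i * v) = i + j * u] (mod p)"
    using assms(1,2) unfolding cong_def by (metis mod_mod_cancel)
  moreover have "[k + (j + i * v) = k + (j + i * 1)] (mod p)"
    using assms(4) by (intro cong_add cong_mult) auto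
  moreover have "[i + j * u = i + j * 1] (mod p)"
    using assms(3) by (intro cong_add cong_mult) auto
  ultimately have "[k + (j + i * 1) = i + j * 1] (mod p)"
    by (meson cong_sym cong_trans)
  hence "[k + (j + i) = 0 + (j + i)] (mod p)" by (simp add: add.commute)
  hence "[k = 0] (mod p)" by (simp only: cong_add_rcancel_nat)
  thus ?thesis by (simp add: cong_0_iff)
qed

context wt begin

lemma PP_split: "PP = p * p^(n-1)"
  using n2 power_minus_mult[of n p] by (simp add: mult.commute)

lemma PP_div: "PP div p = p^(n-1)"
  using PP_split p_gt1 by simp

definition Dset where "Dset = {(x, \<one>\<^bsub>A\<^esub>) | x. x \<in> carrier N \<and> x [^] (p^(n-1)) = \<one>}"

lemma D_sub: "subgroup Dset G"
proof (rule group.subgroupI[OF G_group])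
  show "Dset \<subseteq> carrier G" by (auto simp: Dset_def G_carrier K_one)
  show "Dset \<noteq> {}" by (auto simp: Dset_def)
next
  fix d assume "d \<in> Dset"
  then obtain x where x: "d = (x, \<one>\<^bsub>A\<^esub>)" "x \<in> carrier N" "x [^] (p^(n-1)) = \<one>" by (auto simp: Dset_def)
  have "inv\<^bsub>G\<^esub> d = (inv x, \<one>\<^bsub>A\<^esub>)"
  proof (rule group.inv_equality[OF G_group])
    have "\<one>\<^bsub>A\<^esub> \<otimes>\<^bsub>A\<^esub> \<one>\<^bsub>A\<^esub> = \<one>\<^bsub>A\<^esub>" by (simp add: group.is_monoid[OF A_group] monoid.l_one)
    thus "(inv x, \<one>\<^bsub>A\<^esub>) \<otimes>\<^bsub>G\<^esub> d = \<one>\<^bsub>G\<^esub>" using x by (simp add: G_mult G_one A_one_apply)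
    show "d \<in> carrier G" "(inv x, \<one>\<^bsub>A\<^esub>) \<in> carrier G" using x by (auto simp: G_carrier K_one)
  qed
  moreover have "inv x [^] (p^(n-1)) = \<one>" using x by (simp add: nat_pow_inv)
  ultimately show "inv\<^bsub>G\<^esub> d \<in> Dset" using x by (auto simp: Dset_def)
next
  fix d1 d2 assume "d1 \<in> Dset" "d2 \<in> Dset"
  then obtain x y where x: "d1 = (x, \<one>\<^bsub>A\<^esub>)" "x \<in> carrier N" "x [^] (p^(n-1)) = \<one>"
    and y: "d2 = (y, \<one>\<^bsub>A\<^esub>)" "y \<in> carrier N" "y [^] (p^(n-1)) = \<one>" by (auto simp: Dset_def)
  have "\<one>\<^bsub>A\<^esub> \<otimes>\<^bsub>A\<^esub> \<one>\<^bsub>A\<^esub> = \<one>\<^bsub>A\<^esub>" by (simp add: group.is_monoid[OF A_group] monoid.l_one)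
  moreover have "(x \<otimes> y) [^] (p^(n-1)) = \<one>" using x y by (simp add: pow_mult_distrib m_comm)
  ultimately show "d1 \<otimes>\<^bsub>G\<^esub> d2 \<in> Dset" using x y by (auto simp: Dset_def G_mult A_one_apply)
qed

lemma derived_set_D: "derived_set G (carrier G) \<subseteq> Dset"
proof
  fix c assume "c \<in> derived_set G (carrier G)"
  then obtain x y where xy: "x \<in> carrier G" "y \<in> carrier G"
    and c: "c = x \<otimes>\<^bsub>G\<^esub> y \<otimes>\<^bsub>G\<^esub> inv\<^bsub>G\<^esub> x \<otimes>\<^bsub>G\<^esub> inv\<^bsub>G\<^esub> y" by blast
  interpret GG: group G by (rule G_group)
  have cG: "c \<in> carrier G" using xy c by simp
  have id: "c \<otimes>\<^bsub>G\<^esub> (y \<otimes>\<^bsub>G\<^esub> x) = x \<otimes>\<^bsub>G\<^esub> y" using comm_ident[OF G_group xy] c by simp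
  obtain a f b h where ab: "x = (a, f)" "y = (b, h)" "a \<in> carrier N" "b \<in> carrier N" "f \<in> K" "h \<in> K"
    using xy by (auto simp: G_carrier)
  obtain c1 c2 where cc: "c = (c1, c2)" "c1 \<in> carrier N" "c2 \<in> K" using cG by (auto simp: G_carrier)
  from id have e1: "c1 \<otimes> c2 (b \<otimes> h a) = a \<otimes> f b" and e2: "c2 \<otimes>\<^bsub>A\<^esub> (h \<otimes>\<^bsub>A\<^esub> f) = f \<otimes>\<^bsub>A\<^esub> h"
    using ab cc by (simp_all add: G_mult)
  have "c2 \<otimes>\<^bsub>A\<^esub> (h \<otimes>\<^bsub>A\<^esub> f) = h \<otimes>\<^bsub>A\<^esub> f" using e2 K_comm ab by simp
  hence c2: "c2 = \<one>\<^bsub>A\<^esub>" using group.r_cancel_one[OF A_group] K_A K_mc ab cc by metis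
  with e1 have e1': "c1 \<otimes> (b \<otimes> h a) = a \<otimes> f b" using ab by (simp add: A_one_apply Kc)
  obtain i j k where ijk: "a = e i" "b = e j" "c1 = e k" using carrier_e ab cc by metis
  obtain u v where u: "coprime u p" "f = phi u" and v: "coprime v p" "h = phi v"
    using K_phi ab by metis
  have "e (k + (j + i * v)) = e (i + j * u)" using e1' ijk u v by (simp add: phi_e e_add)
  hence "(k + (j + i * v)) mod PP = (i + j * u) mod PP" by (simp add: e_eq)
  moreover have "p dvd PP" using n2 by simp
  ultimately have "p dvd k" using arith1 K_cong1 u v ab by blast
  then obtain t where "k = p * t" by blast
  hence "k * p^(n-1) = t * PP" using PP_split by (simp add: mult.commute mult.left_commute)
  hence "c1 [^] (p^(n-1)) = \<one>" using ijk by (simp add: e_pow e_one_iff)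
  thus "c \<in> Dset" using cc c2 by (auto simp: Dset_def)
qed

lemma derived_G_D: "derived G (carrier G) \<subseteq> Dset"
  unfolding derived_def by (rule group.generate_subgroup_incl[OF G_group derived_set_D D_sub])

lemma card_D: "card Dset \<le> p^(n-1)"
proof -
  define Dx where "Dx = {x \<in> carrier N. x [^] (p^(n-1)) = \<one>}"
  have "Dset = (\<lambda>x. (x, \<one>\<^bsub>A\<^esub>)) ` Dx" by (auto simp: Dset_def Dx_def)
  hence "card Dset \<le> card Dx" by (simp add: card_image_le Dx_def carrier_finite)
  also have "card Dx = card (lg ` Dx)"
  proof -
    have "inj_on lg Dx" by (rule inj_onI) (metis Dx_def lg(2) mem_Collect_eq)
    thus ?thesis by (simp add: card_image)
  qed
  also have "card (lg ` Dx) \<le> PP div p"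
  proof (rule count_cong)
    show "lg ` Dx \<subseteq> {..<PP}" using lg by (auto simp: Dx_def)
    show "p > 0" "p dvd PP" using p_gt1 n2 by auto
    have "lg x mod p = 0" if "x \<in> Dx" for x
    proof -
      have "x = e (lg x)" "x [^] (p^(n-1)) = \<one>" using that lg by (auto simp: Dx_def)
      hence "PP dvd lg x * p^(n-1)" by (metis e_pow e_one_iff)
      moreover note PP_split
      ultimately have "p dvd lg x" using p_gt1 by (simp add: mult.commute)
      thus ?thesis by simp
    qed
    thus "\<And>i j. i \<in> lg ` Dx \<Longrightarrow> j \<in> lg ` Dx \<Longrightarrow> i mod p = j mod p" by auto
  qed
  also have "PP div p = p^(n-1)" by (rule PP_div)
  finally show ?thesis .
qed

lemma abel_G: "abelianization_order G \<ge> PP"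
proof -
  have eq: "abelianization_order G * card (derived G (carrier G)) = PP * p^(n-1)"
    using abel_order[OF G_group G_finite] G_order by simp
  have "card (derived G (carrier G)) \<le> card Dset"
    using derived_G_D by (rule card_mono[rotated]) (metis D_sub G_finite finite_subset subgroup.subset)
  hence le: "card (derived G (carrier G)) \<le> p^(n-1)" using card_D by simp
  have "PP * p^(n-1) \<le> abelianization_order G * p^(n-1)"
    using eq le by (metis mult_le_mono2)
  thus ?thesis using p_gt1 by simp
qed

end


lemma dvd_div_gcd_int:
  fixes d m x :: int
  assumes "m \<noteq> 0" "m dvd d * x"
  shows "(m div gcd d m) dvd x"
proof -
  define g where "g = gcd d m"
  have g0: "g \<noteq> 0" using assms(1) by (simp add: g_def)
  have dm: "d = g * (d div g)" "m = g * (m div g)" by (simp_all add: g_def)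
  have cop: "coprime (d div g) (m div g)" using div_gcd_coprime[of d m] assms(1) by (simp add: g_def)
  have "g * (m div g) dvd g * ((d div g) * x)" using assms(2) dm by (metis mult.assoc)
  hence "(m div g) dvd (d div g) * x" using g0 by simp
  hence "(m div g) dvd x" using cop by (metis coprime_commute coprime_dvd_mult_right_iff mult.commute)
  thus ?thesis by (simp add: g_def)
qed

lemma nat_mod_eq_int: "((a::nat) mod P = b mod P) \<longleftrightarrow> int P dvd int a - int b"
  by (metis mod_eq_dvd_iff of_nat_eq_iff zmod_int)

lemma arith2:
  fixes k l j j' u P :: nat
  assumes "(k + (l + j*u)) mod P = (j + l) mod P" "(k + (l + j'*u)) mod P = (j' + l) mod P"
    "u \<ge> 1" "P > 0"
  shows "j mod (P div gcd (u-1) P) = j' mod (P div gcd (u-1) P)"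
proof -
  have "int P dvd int (k + (l + j*u)) - int (j + l)" using assms(1) nat_mod_eq_int by blast
  moreover have "int P dvd int (k + (l + j'*u)) - int (j' + l)" using assms(2) nat_mod_eq_int by blast
  ultimately have "int P dvd (int (k + (l + j*u)) - int (j + l)) - (int (k + (l + j'*u)) - int (j' + l))"
    by (rule dvd_diff)
  moreover have "(int (k + (l + j*u)) - int (j + l)) - (int (k + (l + j'*u)) - int (j' + l))
      = int (u - 1) * (int j - int j')" using assms(3) by (simp add: of_nat_diff algebra_simps)
  ultimately have "int P dvd int (u - 1) * (int j - int j')" by simp
  hence "(int P div gcd (int (u-1)) (int P)) dvd (int j - int j')"
    using dvd_div_gcd_int[of "int P" "int (u-1)" "int j - int j'"] assms(4) by simp
  hence "int (P div gcd (u-1) P) dvd int j - int j'" by (simp add: zdiv_int)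
  thus ?thesis using nat_mod_eq_int by blast
qed

lemma primepow_chain:
  fixes p a b n :: nat
  assumes "Factorial_Ring.prime p" "a dvd p^n" "b dvd p^n" "a \<le> b"
  shows "a dvd b"
proof -
  obtain i j where "a = p^i" "b = p^j" using assms divides_primepow_nat by metis
  moreover have "p > 1" using assms(1) prime_gt_1_nat by blast
  ultimately have "i \<le> j" using assms(4) power_le_imp_le_exp by blast
  thus ?thesis using \<open>a = p^i\<close> \<open>b = p^j\<close> le_imp_power_dvd by blast
qed


context wt begin

lemma snd_div: assumes "x \<in> carrier G" "x0 \<in> carrier G" "snd x = snd x0"
  shows "snd (x \<otimes>\<^bsub>G\<^esub> inv\<^bsub>G\<^esub> x0) = \<one>\<^bsub>A\<^esub>"
proof -
  interpret GG: group G by (rule G_group)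
  define w where "w = x \<otimes>\<^bsub>G\<^esub> inv\<^bsub>G\<^esub> x0"
  have wG: "w \<in> carrier G" using assms by (simp add: w_def)
  have "w \<otimes>\<^bsub>G\<^esub> x0 = x" using assms by (simp add: w_def GG.m_assoc)
  obtain w1 w2 where w: "w = (w1, w2)" "w1 \<in> carrier N" "w2 \<in> K" using wG by (auto simp: G_carrier)
  obtain a0 f0 where x0: "x0 = (a0, f0)" "a0 \<in> carrier N" "f0 \<in> K" using assms(2) by (auto simp: G_carrier)
  obtain a where x: "x = (a, f0)" using assms(3) x0 by (metis prod.collapse snd_conv)
  have "w2 \<otimes>\<^bsub>A\<^esub> f0 = f0" using \<open>w \<otimes>\<^bsub>G\<^esub> x0 = x\<close> w x0 x by (simp add: G_mult)
  hence "w2 = \<one>\<^bsub>A\<^esub>" using group.r_cancel_one[OF A_group] K_A w x0 by metis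
  thus ?thesis using w by (simp add: w_def)
qed

lemma U_pos: "coprime u p \<Longrightarrow> u \<ge> 1"
  using p_gt1 by (cases u) auto

lemma H_bound: assumes Hs: "subgroup H G" shows "card H \<le> PP * card (derived G H)"
proof -
  interpret GG: group G by (rule G_group)
  have HG: "H \<subseteq> carrier G" using subgroup.subset[OF Hs] .
  have finH: "finite H" using HG G_finite finite_subset by blast
  define M where "M = {b. (b, \<one>\<^bsub>A\<^esub>) \<in> H}"
  define Q where "Q = snd ` H"
  define D' where "D' = derived G H"
  have MN: "M \<subseteq> carrier N" using HG by (auto simp: M_def G_carrier)
  have finM: "finite M" using MN carrier_finite finite_subset by blast
  have D'G: "D' \<subseteq> carrier G" using GG.derived_in_carrier[OF HG] by (simp add: D'_def)
  have finD': "finite D'" using D'G G_finite finite_subset by blast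
  have "Q \<subseteq> snd ` (carrier N \<times> K)" unfolding Q_def using HG G_carrier by (metis image_mono)
  moreover have "carrier N \<noteq> {}" using g_in by blast
  ultimately have QK: "Q \<subseteq> K" by simp
  have stepa: "card H \<le> card M * card Q"
    unfolding Q_def
  proof (rule fiber_bound[OF finH])
    fix f0 assume "f0 \<in> snd ` H"
    then obtain x0 where x0: "x0 \<in> H" "snd x0 = f0" by blast
    have x0G: "x0 \<in> carrier G" using x0 HG by blast
    let ?F = "{x \<in> H. snd x = f0}"
    let ?h = "\<lambda>x. fst (x \<otimes>\<^bsub>G\<^esub> inv\<^bsub>G\<^esub> x0)"
    have sn: "snd (x \<otimes>\<^bsub>G\<^esub> inv\<^bsub>G\<^esub> x0) = \<one>\<^bsub>A\<^esub>" if "x \<in> ?F" for x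
      using snd_div[of x x0] that x0 x0G HG by auto
    have "inj_on ?h ?F"
    proof (rule inj_onI)
      fix x x' assume xx: "x \<in> ?F" "x' \<in> ?F" "?h x = ?h x'"
      hence "x \<otimes>\<^bsub>G\<^esub> inv\<^bsub>G\<^esub> x0 = x' \<otimes>\<^bsub>G\<^esub> inv\<^bsub>G\<^esub> x0" using sn by (simp add: prod_eq_iff)
      moreover have "x \<in> carrier G" "x' \<in> carrier G" "inv\<^bsub>G\<^esub> x0 \<in> carrier G"
        using xx x0G HG by auto
      ultimately show "x = x'" using GG.r_cancel[of "inv\<^bsub>G\<^esub> x0" x x'] by simp
    qed
    moreover have "?h ` ?F \<subseteq> M"
    proof
      fix y assume "y \<in> ?h ` ?F"
      then obtain x where x: "x \<in> ?F" "y = ?h x" by blast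
      have "x \<otimes>\<^bsub>G\<^esub> inv\<^bsub>G\<^esub> x0 \<in> H"
        using x x0 Hs by (simp add: subgroup.m_closed subgroup.m_inv_closed)
      moreover have "x \<otimes>\<^bsub>G\<^esub> inv\<^bsub>G\<^esub> x0 = (y, \<one>\<^bsub>A\<^esub>)" using sn[OF x(1)] x(2) by (simp add: prod_eq_iff)
      ultimately show "y \<in> M" by (simp add: M_def)
    qed
    ultimately show "card ?F \<le> card M" using finM by (simp add: card_inj_on_le)
  qed
  have one_in: "(\<one>, \<one>\<^bsub>A\<^esub>) \<in> H" using subgroup.one_closed[OF Hs] by (simp add: G_one)
  define T where "T = {gcd (u-1) PP | u. u \<in> U \<and> phi u \<in> Q}"
  have "1 \<in> U" using PP_gt1 by simp
  moreover have "phi 1 \<in> Q" using one_in A_one by (force simp: Q_def)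
  ultimately have "gcd (1 - 1) PP \<in> T" unfolding T_def by blast
  hence Tne: "T \<noteq> {}" by blast
  have finT: "finite T"
  proof -
    have "gcd a PP \<le> PP" for a using PP_gt1 p_gt1 by (intro dvd_imp_le) auto
    hence "T \<subseteq> {..PP}" by (auto simp: T_def)
    thus ?thesis using finite_subset by blast
  qed
  define t0 where "t0 = Min T"
  have "t0 \<in> T" using Min_in[OF finT Tne] by (simp add: t0_def)
  then obtain u0 where u0: "u0 \<in> U" "phi u0 \<in> Q" "t0 = gcd (u0-1) PP" by (auto simp: T_def)
  have t0pos: "t0 > 0" using u0(3) PP_gt1 p_gt1 by simp
  have t0PP: "t0 dvd PP" using u0(3) by simp
  have t0dvd: "t0 dvd u - 1" if "u \<in> U" "phi u \<in> Q" for u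
  proof -
    have "gcd (u-1) PP \<in> T" using that by (auto simp: T_def)
    hence "t0 \<le> gcd (u-1) PP" using Min_le[OF finT] by (simp add: t0_def)
    hence "t0 dvd gcd (u-1) PP" using primepow_chain[OF p_prime t0PP, of "gcd (u-1) PP"] by simp
    thus ?thesis by simp
  qed
  have stepc: "card Q \<le> PP div t0"
  proof -
    define S where "S = {u \<in> U. t0 dvd u - 1}"
    have "Q \<subseteq> phi ` S"
    proof
      fix f assume "f \<in> Q"
      then obtain u where u: "u < PP" "coprime u p" "f = phi u" using QK K_phi by blast
      hence "t0 dvd u - 1" using t0dvd \<open>f \<in> Q\<close> by simp
      thus "f \<in> phi ` S" using u by (auto simp: S_def)
    qed
    hence "card Q \<le> card (phi ` S)" by (rule card_mono[rotated]) (simp add: S_def)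
    also have "\<dots> \<le> card S" by (rule card_image_le) (simp add: S_def)
    also have "\<dots> \<le> PP div t0"
    proof (rule count_cong)
      show "S \<subseteq> {..<PP}" by (auto simp: S_def)
      show "t0 > 0" "t0 dvd PP" using t0pos t0PP by auto
      have "u mod t0 = 1 mod t0" if "u \<in> S" for u
      proof -
        have "u \<ge> 1" using U_pos that by (simp add: S_def)
        hence "u = (u - 1) + 1" by simp
        moreover have "(u - 1) mod t0 = 0" using that by (simp add: S_def)
        ultimately show ?thesis by (metis mod_add_left_eq add_0)
      qed
      thus "\<And>i j. i \<in> S \<Longrightarrow> j \<in> S \<Longrightarrow> i mod t0 = j mod t0" by metis
    qed
    finally show ?thesis .
  qed
  obtain a0 where a0: "(a0, phi u0) \<in> H" using u0(2) by (force simp: Q_def)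
  have a0N: "a0 \<in> carrier N" and phiK: "phi u0 \<in> K" using a0 HG by (auto simp: G_carrier)
  define y0 where "y0 = (a0, phi u0)"
  define cm where "cm b = (b, \<one>\<^bsub>A\<^esub>) \<otimes>\<^bsub>G\<^esub> y0 \<otimes>\<^bsub>G\<^esub> inv\<^bsub>G\<^esub> (b, \<one>\<^bsub>A\<^esub>) \<otimes>\<^bsub>G\<^esub> inv\<^bsub>G\<^esub> y0" for b
  have cm_D: "cm b \<in> D'" if "b \<in> M" for b
  proof -
    have "cm b \<in> derived_set G H" using that a0 by (auto simp: cm_def M_def y0_def)
    thus ?thesis unfolding D'_def derived_def by (rule generate.incl)
  qed
  have cm_eq: "(lg (fst (cm b)) + (lg a0 + lg b * u0)) mod PP = (lg b + lg a0) mod PP" if b: "b \<in> M" for b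
  proof -
    have xG: "(b, \<one>\<^bsub>A\<^esub>) \<in> carrier G" and yG: "y0 \<in> carrier G" using b a0 HG by (auto simp: M_def y0_def)
    have id: "cm b \<otimes>\<^bsub>G\<^esub> (y0 \<otimes>\<^bsub>G\<^esub> (b, \<one>\<^bsub>A\<^esub>)) = (b, \<one>\<^bsub>A\<^esub>) \<otimes>\<^bsub>G\<^esub> y0"
      using comm_ident[OF G_group xG yG] by (simp add: cm_def)
    have "cm b \<in> carrier G" using xG yG by (simp add: cm_def)
    then obtain c1 c2 where cc: "cm b = (c1, c2)" "c1 \<in> carrier N" "c2 \<in> K" by (auto simp: G_carrier)
    have bN: "b \<in> carrier N" using b MN by blast
    have Am: "monoid A" using group.is_monoid[OF A_group] .
    have r1: "phi u0 \<otimes>\<^bsub>A\<^esub> \<one>\<^bsub>A\<^esub> = phi u0" "\<one>\<^bsub>A\<^esub> \<otimes>\<^bsub>A\<^esub> phi u0 = phi u0"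
      using phiK K_A monoid.r_one[OF Am] monoid.l_one[OF Am] by auto
    from id have e1: "c1 \<otimes> c2 (a0 \<otimes> phi u0 b) = b \<otimes> \<one>\<^bsub>A\<^esub> a0" and e2: "c2 \<otimes>\<^bsub>A\<^esub> phi u0 = phi u0"
      using cc r1 by (simp_all add: G_mult y0_def)
    hence "c2 = \<one>\<^bsub>A\<^esub>" using group.r_cancel_one[OF A_group] K_A phiK cc by metis
    with e1 have "c1 \<otimes> (a0 \<otimes> phi u0 b) = b \<otimes> a0" using a0N bN phiK by (simp add: A_one_apply Kc)
    moreover have "phi u0 b = e (lg b * u0)" using lg[OF bN] phi_e by metis
    ultimately have "e (lg c1 + (lg a0 + lg b * u0)) = e (lg b + lg a0)"
      using lg[OF bN] lg[OF a0N] lg[OF cc(2)] by (metis e_add)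
    thus ?thesis using cc by (simp add: e_eq)
  qed
  have stepd: "card M \<le> t0 * card D'"
  proof -
    have "card M \<le> t0 * card ((\<lambda>b. fst (cm b)) ` M)"
    proof (rule fiber_bound[OF finM])
      fix y assume "y \<in> (\<lambda>b. fst (cm b)) ` M"
      let ?F = "{b \<in> M. fst (cm b) = y}"
      have "inj_on lg ?F" by (rule inj_onI) (metis (no_types, lifting) MN lg(2) mem_Collect_eq subsetD)
      hence "card ?F = card (lg ` ?F)" by (simp add: card_image)
      also have "\<dots> \<le> PP div (PP div t0)"
      proof (rule count_cong)
        show "lg ` ?F \<subseteq> {..<PP}" using lg MN by auto
        show "PP div t0 > 0" using t0pos t0PP PP_gt1 by (metis div_greater_zero_iff dvd_imp_le gr_zeroI not_one_less_zero)
        show "PP div t0 dvd PP" using t0PP by (metis dvd_div_mult_self dvd_triv_left)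
        fix i j assume "i \<in> lg ` ?F" "j \<in> lg ` ?F"
        then obtain b b' where bb: "b \<in> M" "b' \<in> M" "fst (cm b) = y" "fst (cm b') = y" "i = lg b" "j = lg b'"
          by auto
        have "u0 \<ge> 1" using U_pos u0(1) by simp
        hence "lg b mod (PP div gcd (u0-1) PP) = lg b' mod (PP div gcd (u0-1) PP)"
          using arith2[of "lg y" "lg a0" "lg b" u0 PP "lg b'"] cm_eq[OF bb(1)] cm_eq[OF bb(2)] bb(3,4) PP_gt1 p_gt1
          by simp
        thus "i mod (PP div t0) = j mod (PP div t0)" using bb u0(3) by simp
      qed
      also have "PP div (PP div t0) = t0"
      proof -
        obtain q where q: "PP = t0 * q" using t0PP by blast
        hence "q > 0" using PP_gt1 p_gt1 by (cases q) auto
        thus ?thesis using q t0pos by simp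
      qed
      finally show "card ?F \<le> t0" .
    qed
    also have "card ((\<lambda>b. fst (cm b)) ` M) \<le> card D'"
    proof -
      have "(\<lambda>b. fst (cm b)) ` M \<subseteq> fst ` D'" using cm_D by auto
      hence "card ((\<lambda>b. fst (cm b)) ` M) \<le> card (fst ` D')" using finD' by (simp add: card_mono)
      also have "\<dots> \<le> card D'" using finD' by (rule card_image_le)
      finally show ?thesis .
    qed
    finally show ?thesis by simp
  qed
  have "card H \<le> (t0 * card D') * (PP div t0)" using stepa stepc stepd
    by (meson le_trans mult_le_mono)
  also have "\<dots> = card D' * (t0 * (PP div t0))" by (simp add: mult_ac)
  also have "t0 * (PP div t0) = PP" using t0PP by simp
  finally show ?thesis by (simp add: D'_def mult.commute)
qed

lemma abel_H: assumes "subgroup H G" shows "abelianization_order (G\<lparr>carrier := H\<rparr>) \<le> PP"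
proof -
  interpret GG: group G by (rule G_group)
  have grp: "group (G\<lparr>carrier := H\<rparr>)" using subgroup.subgroup_is_group[OF assms G_group] .
  have finH: "finite H" using subgroup.subset[OF assms] G_finite finite_subset by blast
  have eq: "abelianization_order (G\<lparr>carrier := H\<rparr>) * card (derived G H) = card H"
    using abel_order[OF grp] finH GG.derived_consistent[OF subset_refl assms] by (simp add: order_def)
  have "subgroup (derived G H) G" using GG.derived_is_subgroup subgroup.subset[OF assms] by blast
  hence "card (derived G H) > 0"
    using subgroup.one_closed G_finite finite_subset subgroup.subset card_gt_0_iff by (metis empty_iff)
  moreover have "abelianization_order (G\<lparr>carrier := H\<rparr>) * card (derived G H) \<le> PP * card (derived G H)"
    using eq H_bound[OF assms] by simp
  ultimately show ?thesis by simp
qed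

end


theorem lemma2p8:
  fixes N :: "('a, 'b) monoid_scheme" and p n :: nat and K :: "('a \<Rightarrow> 'a) set"
  assumes "Factorial_Ring.prime p" and "n \<ge> 2"
    and "group N" and "cyclic_group N" and "order N = p ^ n"
    and "sylow_subgroup (AutoGroup N) p K"
  shows "weakly_top (aut_semidirect N K)"
proof -
  obtain g where g: "g \<in> carrier N" "subgroup_generated N {g} = N"
    using assms(4) unfolding cyclic_group_def by blast
  have cg: "comm_group N" using group.cyclic_imp_abelian_group[OF assms(3,4)] .
  interpret W: wt N p n K g
    using assms g cg unfolding sylow_subgroup_def
    by (intro wt.intro wt_axioms.intro) auto
  show ?thesis unfolding weakly_top_def
  proof (intro conjI allI impI)
    show "group (aut_semidirect N K)" by (rule W.G_group)
    show "finite (carrier (aut_semidirect N K))" by (rule W.G_finite)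
    fix H assume "subgroup H (aut_semidirect N K) \<and> H \<noteq> carrier (aut_semidirect N K)"
    hence "abelianization_order (aut_semidirect N K\<lparr>carrier := H\<rparr>) \<le> p ^ n" using W.abel_H by blast
    also have "p ^ n \<le> abelianization_order (aut_semidirect N K)" by (rule W.abel_G)
    finally show "abelianization_order (aut_semidirect N K\<lparr>carrier := H\<rparr>) \<le> abelianization_order (aut_semidirect N K)" .
  qed
qed


end
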